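(* Let $\{\mathcal H,\gamma,\ell,\ell^{(2)}\}$ be null metric hypersurface data $(\Phi,\xi)$-embedded in a semi-Riemannian manifold $(\mathcal M,g)$ and let $Z\in\mathfrak X(\mathcal M)$. Then on $\Phi(\mathcal H)$, $$Z^\alpha=\xi^\alpha n^aZ_a+P^{ab}e_a^\alpha Z_b+\nu^\alpha\,\boldsymbol Z(\xi),$$ where $\boldsymbol Z=g(Z,\cdot)$ and $Z_a$ denotes the components of $\Phi^\star\boldsymbol Z$.
   Context: Metric hypersurface data: $\mathcal H$ smooth $\mathfrak n$-manifold with symmetric $(0,2)$-tensor $\gamma$, one-form $\ell$, function $\ell^{(2)}$ such that $\mathcal A((W,a),(V,b))=\gamma(W,V)+a\ell(V)+b\ell(W)+ab\ell^{(2)}$ is non-degenerate on each $T_p\mathcal H\times\mathbb R$. $P$ (symmetric $(2,0)$), $n$, $n^{(2)}$ defined by $\gamma_{ab}n^b+n^{(2)}\ell_a=0$, $\ell_an^a+n^{(2)}\ell^{(2)}=1$, $P^{ab}\ell_b+\ell^{(2)}n^a=0$, $P^{ac}\gamma_{cb}+\ell_bn^a=\delta^a_b$; null means $n^{(2)}=0$. $(\Phi,\xi)$-embedded: $\Phi:\mathcal H\to\mathcal M$ embedding, $\xi$ vector field along $\Phi(\mathcal H)$ transverse to it, $\Phi^\star g=\gamma$, $\Phi^\star(g(\xi,\cdot))=\ell$, $\Phi^\star(g(\xi,\xi))=\ell^{(2)}$. $e_a^\alpha$ are the components of $\Phi_\star e_a$ for a basis $e_a$ of $T\mathcal H$, and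 $\nu=n^{(2)}\xi+\Phi_\star n$ ($=\Phi_\star n$ here). *)

theory Defs
  imports "HOL-Analysis.Analysis"
begin

text \<open>Pointwise (tangent-space) rendering. At a point p of H we work in the tangent
space T_{Phi(p)}M, identified with real^'m, with metric g given by a symmetric
nondegenerate matrix G. The index type 'n labels a basis e_a of T_pH; the push-forwards
Phi_* e_a are the vectors e a :: real^'m. Tensors on H are given by their components
in this basis.\<close>

definition metric :: "real^'m^'m \<Rightarrow> real^'m \<Rightarrow> real^'m \<Rightarrow> real" where
  "metric G x y = x \<bullet> (G *v y)"

definition semi_riemannian_metric :: "real^'m^'m \<Rightarrow> bool" where
  "semi_riemannian_metric G \<longleftrightarrow> transpose G = G \<and>
     (\<forall>y. (\<forall>x. metric G x y = 0) \<longrightarrow> y = 0)"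

text \<open>Metric hypersurface data at a point: the form A on T_pH x R is nondegenerate.\<close>
definition hypersurface_data ::
  "('n::finite \<Rightarrow> 'n \<Rightarrow> real) \<Rightarrow> ('n \<Rightarrow> real) \<Rightarrow> real \<Rightarrow> bool" where
  "hypersurface_data gam l l2 \<longleftrightarrow> (\<forall>a b. gam a b = gam b a) \<and>
     (\<forall>(W::'n \<Rightarrow> real) (w::real).
        (\<forall>(V::'n \<Rightarrow> real) (v::real).
            (\<Sum>i\<in>UNIV. \<Sum>j\<in>UNIV. gam i j * W i * V j) + w * (\<Sum>i\<in>UNIV. l i * V i)
            + v * (\<Sum>i\<in>UNIV. l i * W i) + w * v * l2 = 0)
        \<longrightarrow> W = (\<lambda>_. 0) \<and> w = 0)"

definition data_inverse ::
  "('n::finite \<Rightarrow> 'n \<Rightarrow> real) \<Rightarrow> ('n \<Rightarrow> real) \<Rightarrow> real \<Rightarrow>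
   ('n \<Rightarrow> 'n \<Rightarrow> real) \<Rightarrow> ('n \<Rightarrow> real) \<Rightarrow> real \<Rightarrow> bool" where
  "data_inverse gam l l2 P n n2 \<longleftrightarrow>
     (\<forall>a b. P a b = P b a) \<and>
     (\<forall>a. (\<Sum>b\<in>UNIV. gam a b * n b) + n2 * l a = 0) \<and>
     (\<Sum>a\<in>UNIV. l a * n a) + n2 * l2 = 1 \<and>
     (\<forall>a. (\<Sum>b\<in>UNIV. P a b * l b) + l2 * n a = 0) \<and>
     (\<forall>a b. (\<Sum>c\<in>UNIV. P a c * gam c b) + l b * n a = (if a = b then 1 else 0))"

definition embedded_at ::
  "real^'m^'m \<Rightarrow> ('n::finite \<Rightarrow> real^'m) \<Rightarrow> real^'m \<Rightarrow>
   ('n \<Rightarrow> 'n \<Rightarrow> real) \<Rightarrow> ('n \<Rightarrow> real) \<Rightarrow> real \<Rightarrow> bool" where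
  "embedded_at G e xi gam l l2 \<longleftrightarrow>
     CARD('m) = CARD('n) + 1 \<and>
     (\<forall>c::'n \<Rightarrow> real. (\<Sum>a\<in>UNIV. c a *\<^sub>R e a) = 0 \<longrightarrow> c = (\<lambda>_. 0)) \<and>
     xi \<notin> span (range e) \<and>
     (\<forall>a b. gam a b = metric G (e a) (e b)) \<and>
     (\<forall>a. l a = metric G xi (e a)) \<and>
     l2 = metric G xi xi"

end

theory Submission
  imports Defs
begin

lemma metric_sym: "transpose G = G \<Longrightarrow> metric G x y = metric G y x"
proof -
  assume s: "transpose G = G"
  have "x \<bullet> (G *v y) = (x v* G) \<bullet> y" by (simp add: dot_lmul_matrix)
  also have "x v* G = G *v x" using transpose_matrix_vector[of G x] unfolding s by (rule sym)
  finally have "x \<bullet> (G *v y) = (G *v x) \<bullet> y" .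
  thus ?thesis unfolding metric_def by (simp add: inner_commute[of "G *v x" y])
qed

lemma metric_add_left: "metric G (x + y) z = metric G x z + metric G y z"
  by (simp add: metric_def inner_add_left)
lemma metric_diff_left: "metric G (x - y) z = metric G x z - metric G y z"
  by (simp add: metric_def inner_diff_left)
lemma metric_scale_left: "metric G (c *\<^sub>R x) z = c * metric G x z"
  by (simp add: metric_def)
lemma metric_sum_left: "metric G (\<Sum>a\<in>A. f a) z = (\<Sum>a\<in>A. metric G (f a) z)"
  by (simp add: metric_def inner_sum_left)

lemma span_all:
  fixes e :: "'n::finite \<Rightarrow> real^'m" and xi :: "real^'m"
  assumes card: "CARD('m) = CARD('n) + 1"
    and ind: "\<forall>c::'n \<Rightarrow> real. (\<Sum>a\<in>UNIV. c a *\<^sub>R e a) = 0 \<longrightarrow> c = (\<lambda>_. 0)"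
    and xi: "xi \<notin> span (range e)"
  shows "span (insert xi (range e)) = UNIV"
proof -
  have inj: "inj e"
  proof (rule injI, rule ccontr)
    fix a b assume eq: "e a = e b" and ne: "a \<noteq> b"
    let ?c = "\<lambda>x. (if x = a then 1 else 0) - (if x = b then 1 else (0::real))"
    have "(\<Sum>x\<in>UNIV. ?c x *\<^sub>R e x) = e a - e b"
      by (simp add: scaleR_left_diff_distrib sum_subtractf if_distrib[of "\<lambda>t. t *\<^sub>R _"] cong: if_cong)
    also have "\<dots> = 0" using eq by simp
    finally have "?c = (\<lambda>_. 0)" by (rule ind[rule_format])
    then have "?c a = (\<lambda>_. 0::real) a" by (rule fun_cong)
    thus False using ne by simp
  qed
  have indep: "independent (range e)"
  proof
    assume "dependent (range e)"
    then obtain u where u: "\<exists>v\<in>range e. u v \<noteq> 0" "(\<Sum>v\<in>range e. u v *\<^sub>R v) = 0"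
      using dependent_finite[of "range e"] by auto
    have "(\<Sum>a\<in>UNIV. u (e a) *\<^sub>R e a) = 0"
      using u(2) by (simp add: sum.reindex[OF inj])
    hence "(\<lambda>a. u (e a)) = (\<lambda>_. 0)" by (rule ind[rule_format])
    thus False using u(1) by (auto dest: fun_cong)
  qed
  have ind2: "independent (insert xi (range e))"
    using independent_insertI[OF xi indep] .
  have cardI: "card (insert xi (range e)) = CARD('m)"
  proof -
    have "xi \<notin> range e" using xi span_base by blast
    thus ?thesis using card card_image[OF inj] by simp
  qed
  have "dim (UNIV :: (real^'m) set) = CARD('m)"
    by (simp add: Euclidean_Space.dim_UNIV)
  hence "UNIV \<subseteq> span (insert xi (range e))"
    using card_eq_dim[of "insert xi (range e)" UNIV] ind2 cardI by simp
  thus ?thesis by auto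
qed

theorem lemmaB1:
  fixes G :: "real^'m^'m" and e :: "'n::finite \<Rightarrow> real^'m" and xi :: "real^'m"
    and gam :: "'n \<Rightarrow> 'n \<Rightarrow> real" and l :: "'n \<Rightarrow> real" and l2 :: real
    and P :: "'n \<Rightarrow> 'n \<Rightarrow> real" and n :: "'n \<Rightarrow> real" and n2 :: real
    and Z :: "real^'m"
  assumes "semi_riemannian_metric G"
    and "hypersurface_data gam l l2"
    and "data_inverse gam l l2 P n n2"
    and "n2 = 0"
    and "embedded_at G e xi gam l l2"
  shows "Z = (\<Sum>a\<in>UNIV. n a * metric G Z (e a)) *\<^sub>R xi
           + (\<Sum>a\<in>UNIV. \<Sum>b\<in>UNIV. (P a b * metric G Z (e b)) *\<^sub>R e a)
           + metric G Z xi *\<^sub>R (n2 *\<^sub>R xi + (\<Sum>a\<in>UNIV. n a *\<^sub>R e a))"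
proof -
  have sym: "transpose G = G" and nondeg: "\<And>y. (\<forall>x. metric G x y = 0) \<Longrightarrow> y = 0"
    using assms(1) unfolding semi_riemannian_metric_def by auto
  note di = assms(3)[unfolded data_inverse_def]
  have Psym: "\<And>a b. P a b = P b a" using di by blast
  have gn: "\<And>a. (\<Sum>b\<in>UNIV. gam a b * n b) = 0" using di assms(4) by simp
  have ln: "(\<Sum>a\<in>UNIV. l a * n a) = 1" using di assms(4) by simp
  have Pl: "\<And>a. (\<Sum>b\<in>UNIV. P a b * l b) = - l2 * n a" using di by (simp add: eq_neg_iff_add_eq_0)
  have Pg: "\<And>a b. (\<Sum>c\<in>UNIV. P a c * gam c b) = (if a = b then 1 else 0) - l b * n a"
    using di by (simp add: eq_diff_eq)
  note emb = assms(5)[unfolded embedded_at_def]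
  have gam: "\<And>a b. metric G (e a) (e b) = gam a b" using emb by simp
  have gsym: "\<And>a b. gam a b = gam b a" using gam metric_sym[OF sym] by metis
  have lxe: "\<And>a. metric G xi (e a) = l a" using emb by simp
  have lex: "\<And>a. metric G (e a) xi = l a" using lxe metric_sym[OF sym] by metis
  have l2: "metric G xi xi = l2" using emb by simp
  define Zb where "Zb = (\<lambda>a. metric G Z (e a))"
  define Zx where "Zx = metric G Z xi"
  define R where "R = (\<Sum>a\<in>UNIV. n a * Zb a) *\<^sub>R xi
           + (\<Sum>a\<in>UNIV. \<Sum>b\<in>UNIV. (P a b * Zb b) *\<^sub>R e a)
           + Zx *\<^sub>R (n2 *\<^sub>R xi + (\<Sum>a\<in>UNIV. n a *\<^sub>R e a))"
  have Re: "metric G R (e c) = Zb c" for c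
  proof -
    have "metric G R (e c) = (\<Sum>a\<in>UNIV. n a * Zb a) * l c
        + (\<Sum>a\<in>UNIV. \<Sum>b\<in>UNIV. P a b * Zb b * gam a c) + Zx * (\<Sum>a\<in>UNIV. n a * gam a c)"
      unfolding R_def using assms(4)
      by (simp add: metric_add_left metric_scale_left metric_sum_left gam lxe)
    also have "(\<Sum>a\<in>UNIV. n a * gam a c) = 0"
      using gn[of c] by (simp add: gsym[of _ c] mult.commute)
    also have "(\<Sum>a\<in>UNIV. \<Sum>b\<in>UNIV. P a b * Zb b * gam a c)
        = (\<Sum>b\<in>UNIV. Zb b * (\<Sum>a\<in>UNIV. P b a * gam a c))"
      by (subst sum.swap) (simp add: sum_distrib_left Psym mult_ac)
    also have "\<dots> = (\<Sum>b\<in>UNIV. Zb b * (if b = c then 1 else 0)) - l c * (\<Sum>b\<in>UNIV. n b * Zb b)"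
      by (simp add: Pg right_diff_distrib sum_subtractf sum_distrib_left mult_ac)
    finally show ?thesis by (simp add: if_distrib cong: if_cong)
  qed
  have Rx: "metric G R xi = Zx"
  proof -
    have "metric G R xi = (\<Sum>a\<in>UNIV. n a * Zb a) * l2
        + (\<Sum>a\<in>UNIV. \<Sum>b\<in>UNIV. P a b * Zb b * l a) + Zx * (\<Sum>a\<in>UNIV. n a * l a)"
      unfolding R_def using assms(4)
      by (simp add: metric_add_left metric_scale_left metric_sum_left lex l2)
    also have "(\<Sum>a\<in>UNIV. n a * l a) = 1" using ln by (simp add: mult.commute)
    also have "(\<Sum>a\<in>UNIV. \<Sum>b\<in>UNIV. P a b * Zb b * l a)
        = (\<Sum>b\<in>UNIV. Zb b * (\<Sum>a\<in>UNIV. P a b * l a))"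
      by (subst sum.swap) (simp add: sum_distrib_left mult_ac)
    also have "\<dots> = - l2 * (\<Sum>b\<in>UNIV. n b * Zb b)"
    proof -
      have Pl': "(\<Sum>a\<in>UNIV. P a b * l a) = - l2 * n b" for b
      proof -
        have "(\<Sum>a\<in>UNIV. P a b * l a) = (\<Sum>a\<in>UNIV. P b a * l a)"
          using Psym[of _ b] by (intro sum.cong) simp_all
        thus ?thesis using Pl[of b] by simp
      qed
      have "(\<Sum>b\<in>UNIV. Zb b * (\<Sum>a\<in>UNIV. P a b * l a)) = (\<Sum>b\<in>UNIV. Zb b * (- l2 * n b))"
        by (simp only: Pl')
      thus ?thesis by (simp add: sum_distrib_left mult_ac)
    qed
    finally show ?thesis by simp
  qed
  define D where "D = Z - R"
  have sub: "subspace {x. metric G x D = 0}"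
    using subspace_hyperplane2[of "G *v D"] unfolding metric_def by simp
  have "metric G x D = 0" if "x \<in> insert xi (range e)" for x
  proof -
    have "metric G x D = metric G D x" by (rule metric_sym[OF sym])
    also have "\<dots> = metric G Z x - metric G R x" by (simp add: D_def metric_diff_left)
    also have "\<dots> = 0" using that Re Rx by (auto simp: Zb_def Zx_def)
    finally show ?thesis .
  qed
  hence "insert xi (range e) \<subseteq> {x. metric G x D = 0}" by blast
  hence "span (insert xi (range e)) \<subseteq> {x. metric G x D = 0}"
    using span_minimal sub by blast
  moreover have "span (insert xi (range e)) = UNIV"
    using emb by (intro span_all) auto
  ultimately have "\<forall>x. metric G x D = 0" by blast
  hence "D = 0" by (rule nondeg)
  hence "Z = R" unfolding D_def by simp
  thus ?thesis unfolding R_def Zb_def Zx_def .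
qed

end
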